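(* For every $n\ge 1$, the burning number of the directed path $P_n$ on $n$ nodes is $\left\lceil \sqrt{2n+\tfrac14}-\tfrac12\right\rceil$.
   Context: Burning process on a digraph $D$: a sequence $(x_1,\ldots,x_b)$ of nodes is a burning sequence for $D$ if after $b$ steps of the following process every node of $D$ is burned; the $i$-th step consists of first burning all out-neighbours of all currently burned nodes, and then burning the node $x_i$. The burning number of $D$ is the length of a shortest burning sequence. Equivalently, with $N^+_k(v)$ the set of nodes reachable from $v$ by a directed path with at most $k$ arcs, the burning number is the least $b$ such that there are nodes $v_1,\ldots,v_b$ with $V(D)=\bigcup_{i=1}^b N^+_{i-1}(v_i)$. *)

theory Defs
  imports Complex_Main
begin

definition out_ball :: "('a \<times> 'a) set \<Rightarrow> nat \<Rightarrow> 'a \<Rightarrow> 'a set" where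
  "out_ball A k v = {w. \<exists>j\<le>k. (v, w) \<in> A ^^ j}"

definition is_burning_seq :: "'a set \<Rightarrow> ('a \<times> 'a) set \<Rightarrow> nat \<Rightarrow> (nat \<Rightarrow> 'a) \<Rightarrow> bool" where
  "is_burning_seq V A b v \<longleftrightarrow>
     (\<forall>i\<in>{1..b}. v i \<in> V) \<and> V = (\<Union>i\<in>{1..b}. out_ball A (i - 1) (v i))"

definition burning_number :: "'a set \<Rightarrow> ('a \<times> 'a) set \<Rightarrow> nat" where
  "burning_number V A = (LEAST b. \<exists>v. is_burning_seq V A b v)"

definition dipath_nodes :: "nat \<Rightarrow> nat set" where
  "dipath_nodes n = {0..<n}"

definition dipath_arcs :: "nat \<Rightarrow> (nat \<times> nat) set" where
  "dipath_arcs n = {(i, i + 1) | i. i + 1 < n}"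

end

theory Submission
  imports Defs
begin

lemma path_pow: "(v,w) \<in> dipath_arcs n ^^ j \<Longrightarrow> w = v + j \<and> (j = 0 \<or> w < n)"
proof (induction j arbitrary: w)
  case 0 then show ?case by simp
next
  case (Suc j)
  then obtain u where "(v,u) \<in> dipath_arcs n ^^ j" "(u,w) \<in> dipath_arcs n" by auto
  then show ?case using Suc.IH by (auto simp: dipath_arcs_def)
qed

lemma path_pow2: "v + j < n \<Longrightarrow> (v, v+j) \<in> dipath_arcs n ^^ j"
proof (induction j)
  case 0 then show ?case by simp
next
  case (Suc j)
  have "(v, v+j) \<in> dipath_arcs n ^^ j" using Suc by simp
  moreover have "(v+j, v + Suc j) \<in> dipath_arcs n" using Suc.prems by (auto simp: dipath_arcs_def)
  ultimately show ?case by (meson relpow_Suc_I)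
qed

lemma ball: "v < n \<Longrightarrow> out_ball (dipath_arcs n) k v = {v..min (v+k) (n-1)}"
proof (intro set_eqI iffI)
  fix w assume "v < n" "w \<in> out_ball (dipath_arcs n) k v"
  then show "w \<in> {v..min (v+k) (n-1)}" unfolding out_ball_def
    using path_pow by fastforce
next
  fix w assume a: "v < n" "w \<in> {v..min (v+k) (n-1)}"
  then have "(v, v + (w - v)) \<in> dipath_arcs n ^^ (w - v)"
    by (intro path_pow2) auto
  then show "w \<in> out_ball (dipath_arcs n) k v" unfolding out_ball_def using a
    by (intro CollectI exI[of _ "w - v"]) auto
qed

lemma lower:
  assumes "is_burning_seq (dipath_nodes n) (dipath_arcs n) m v"
  shows "2 * n \<le> m * (m + 1)"
proof -
  have V: "{0..<n} = (\<Union>i\<in>{1..m}. out_ball (dipath_arcs n) (i - 1) (v i))"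
   and vin: "\<And>i. i \<in> {1..m} \<Longrightarrow> v i < n"
    using assms unfolding is_burning_seq_def dipath_nodes_def by auto
  have c: "card (out_ball (dipath_arcs n) (i - 1) (v i)) \<le> i" if "i \<in> {1..m}" for i
    using ball[OF vin[OF that], of "i - 1"] that by auto
  have "n = card (\<Union>i\<in>{1..m}. out_ball (dipath_arcs n) (i - 1) (v i))"
    using V by (metis card_atLeastLessThan diff_zero)
  also have "\<dots> \<le> (\<Sum>i\<in>{1..m}. card (out_ball (dipath_arcs n) (i - 1) (v i)))"
    by (rule card_UN_le) simp
  also have "\<dots> \<le> (\<Sum>i\<in>{1..m}. i)" by (rule sum_mono) (use c in auto)
  finally have "2 * n \<le> 2 * (\<Sum>i\<in>{1..m}. i)" by simp
  also have "\<dots> = m * (m + 1)" using double_gauss_sum_from_Suc_0[of m, where ?'a = nat] by simp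
  finally show ?thesis .
qed

definition tri :: "nat \<Rightarrow> nat" where "tri m = (\<Sum>i\<in>{1..m}. i)"

lemma tri_Suc: "tri (Suc m) = tri m + Suc m" by (simp add: tri_def)
lemma tri_0: "tri 0 = 0" by (simp add: tri_def)

lemma find_i: "w < tri b \<Longrightarrow> \<exists>i\<in>{1..b}. tri (i - 1) \<le> w \<and> w < tri i"
proof (induction b)
  case 0 then show ?case by (simp add: tri_0)
next
  case (Suc b)
  show ?case
  proof (cases "w < tri b")
    case True then show ?thesis using Suc.IH by force
  next
    case False then show ?thesis using Suc.prems by (intro bexI[of _ "Suc b"]) auto
  qed
qed

lemma upper:
  assumes "2 * n \<le> m * (m + 1)" "n \<ge> 1"
  shows "\<exists>v. is_burning_seq (dipath_nodes n) (dipath_arcs n) m v"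
proof -
  define v where "v i = min (tri (i - 1)) (n - 1)" for i
  have T: "2 * tri m = m * (m + 1)"
    unfolding tri_def using double_gauss_sum_from_Suc_0[of m, where ?'a = nat] by simp
  have "is_burning_seq (dipath_nodes n) (dipath_arcs n) m v"
    unfolding is_burning_seq_def dipath_nodes_def
  proof (intro conjI ballI set_eqI iffI)
    fix i assume "i \<in> {1..m}" then show "v i \<in> {0..<n}" using assms by (auto simp: v_def)
  next
    fix w assume "w \<in> (\<Union>i\<in>{1..m}. out_ball (dipath_arcs n) (i - 1) (v i))"
    then obtain i where "i \<in> {1..m}" "w \<in> out_ball (dipath_arcs n) (i - 1) (v i)" by auto
    moreover have "v i < n" using assms by (auto simp: v_def)
    ultimately show "w \<in> {0..<n}" using ball by auto
  next
    fix w assume w: "w \<in> {0..<n}"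
    then have "w < tri m" using T assms by auto
    then obtain i where i: "i \<in> {1..m}" "tri (i - 1) \<le> w" "w < tri i" using find_i by blast
    have ti: "tri i = tri (i - 1) + i" using i(1) tri_Suc[of "i - 1"] by auto
    have vi: "v i = tri (i - 1)" using i w by (auto simp: v_def)
    have "w \<in> out_ball (dipath_arcs n) (i - 1) (v i)"
      using ball[of "v i" n "i - 1"] vi i w ti by auto
    then show "w \<in> (\<Union>i\<in>{1..m}. out_ball (dipath_arcs n) (i - 1) (v i))" using i by auto
  qed
  then show ?thesis by blast
qed

lemma bn: assumes "n \<ge> 1"
  shows "burning_number (dipath_nodes n) (dipath_arcs n) = (LEAST m. 2 * n \<le> m * (m + 1))"
  unfolding burning_number_def
  by (rule arg_cong[where f = Least], rule ext) (use lower upper assms in blast)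

lemma ceil_char:
  fixes b :: nat
  assumes "2 * n \<le> b * (b + 1)" "(b - 1) * b < 2 * n" "b \<ge> 1"
  shows "int b = \<lceil>sqrt (2 * real n + 1/4) - 1/2\<rceil>"
proof -
  have r1: "2 * real n \<le> real b * (real b + 1)"
    using assms(1) by (metis of_nat_1 of_nat_add of_nat_le_iff of_nat_mult of_nat_numeral)
  have r2: "(real b - 1) * real b < 2 * real n"
    using assms(2,3) by (metis of_nat_1 of_nat_diff of_nat_less_iff of_nat_mult of_nat_numeral)
  have "sqrt (2 * real n + 1/4) \<le> real b + 1/2"
    by (rule real_le_lsqrt) (use r1 in \<open>auto simp: algebra_simps power2_eq_square\<close>)
  moreover have "real b - 1/2 < sqrt (2 * real n + 1/4)"
    by (rule real_less_rsqrt) (use r2 in \<open>auto simp: algebra_simps power2_eq_square\<close>)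
  ultimately show ?thesis by (intro ceiling_unique[symmetric]) auto
qed

theorem mainTheorem3:
  fixes n :: nat
  assumes "n \<ge> 1"
  shows "int (burning_number (dipath_nodes n) (dipath_arcs n))
           = \<lceil>sqrt (2 * real n + 1/4) - 1/2\<rceil>"
proof -
  define b where "b = (LEAST m. 2 * n \<le> m * (m + 1))"
  have e: "\<exists>m. 2 * n \<le> m * (m + 1)" by (rule exI[of _ "2*n"]) simp
  have b1: "2 * n \<le> b * (b + 1)" unfolding b_def using LeastI_ex[OF e] .
  have b0: "b \<ge> 1" using b1 assms by (cases b) auto
  have b2: "(b - 1) * b < 2 * n"
  proof -
    have "\<not> 2 * n \<le> (b - 1) * (b - 1 + 1)" unfolding b_def
      by (rule not_less_Least) (use b0 in \<open>simp add: b_def\<close>)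
    then show ?thesis using b0 by simp
  qed
  show ?thesis using bn[OF assms] ceil_char[OF b1 b2 b0] b_def by simp
qed

end
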